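(* Let $n\ge 2$ be an integer and write $n=\sum_{i=r}^{k}a_i2^i$ with $a_r,a_{r+1},\dots,a_k\in\{0,1\}$ and $a_r=a_k=1$. (i) If $n$ is odd, then a permutation in $S_n$ of type $x(n)$ is an odd permutation if and only if $\sum_{i=1}^{k}a_i\equiv 1\pmod 2$. (ii) If $n$ is even, then a permutation of type $x(n)$ and a permutation of type $y(n)$ are both odd permutations if and only if $\sum_{i=r}^{k}a_i\equiv 1\pmod 2$ and $r\geq 2$ is even.
   Context: The type of a permutation is the partition of $n$ given by the lengths of the cycles (including fixed points) in its disjoint cycle decomposition. If $n=\sum_{i=1}^{t}2^{n_i}$ with $0\le n_1<n_2<\dots<n_t$ is the binary expansion of $n$, then $x(n)$ is the partition $(2^{n_t},\dots,2^{n_1})$. If $n$ is even and $n-2=\sum_{i=1}^{\ell}2^{m_i}$ with $0<m_1<\dots<m_\ell$ is the binary expansion of $n-2$, then $y(n)$ is the partition $(2^{m_\ell},\dots,2^{m_1},1,1)$. *)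

theory Defs
  imports "HOL-Combinatorics.Combinatorics" "HOL-Library.Multiset"
begin

definition bdigit :: "nat \<Rightarrow> nat \<Rightarrow> nat" where
  "bdigit n i = (n div 2 ^ i) mod 2"

text \<open>Cycle type of a permutation p of {1..n}: multiset of the sizes of its cycles
  (orbits), fixed points included (they have orbit of size 1).\<close>
definition cycle_type :: "nat \<Rightarrow> (nat \<Rightarrow> nat) \<Rightarrow> nat multiset" where
  "cycle_type n p = image_mset card (mset_set ((\<lambda>x. orbit p x) ` {1..n}))"

definition xpart :: "nat \<Rightarrow> nat multiset" where
  "xpart n = image_mset (\<lambda>i. 2 ^ i) (mset_set {i. bdigit n i = 1})"

definition ypart :: "nat \<Rightarrow> nat multiset" where
  "ypart n = xpart (n - 2) + {#1, 1#}"

end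

theory Submission
  imports Defs "HOL-Algebra.Sym_Groups"
begin


lemma bdigit_0: "bdigit n 0 = n mod 2" by (simp add: bdigit_def)
lemma bdigit_Suc: "bdigit n (Suc i) = bdigit (n div 2) i"
  by (simp add: bdigit_def div_mult2_eq)

lemma S_rec: "{i. bdigit n i = 1} = (if odd n then {0} else {}) \<union> Suc ` {i. bdigit (n div 2) i = 1}"
  apply (rule Set.set_eqI)
  subgoal for i by (cases i) (auto simp: bdigit_0 bdigit_Suc odd_iff_mod_2_eq_one)
  done

lemma S_fin: "finite {i. bdigit n i = 1}"
proof (rule finite_subset)
  show "{i. bdigit n i = 1} \<subseteq> {..<n}"
  proof
    fix i assume "i \<in> {i. bdigit n i = 1}"
    then have "n div 2 ^ i \<noteq> 0" by (auto simp: bdigit_def)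
    then have "2 ^ i \<le> n" by (simp add: div_eq_0_iff)
    moreover have "i < 2 ^ i" by (rule less_exp)
    ultimately show "i \<in> {..<n}" by (simp del: less_exp)
  qed
qed simp

fun pc :: "nat \<Rightarrow> nat" where "pc n = (if n = 0 then 0 else n mod 2 + pc (n div 2))"
fun tz :: "nat \<Rightarrow> nat" where "tz n = (if n = 0 \<or> odd n then 0 else Suc (tz (n div 2)))"
declare pc.simps[simp del] tz.simps[simp del]

lemma S_0: "{i. bdigit 0 i = 1} = {}" by (simp add: bdigit_def)
lemma pc_0[simp]: "pc 0 = 0" by (simp add: pc.simps)
lemma tz_0[simp]: "tz 0 = 0" by (simp add: tz.simps)
lemma pc_even: "pc (2 * t) = pc t" by (cases "t = 0") (simp_all add: pc.simps[of "2*t"])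
lemma pc_odd: "pc (Suc (2 * t)) = Suc (pc t)" by (subst pc.simps) simp
lemma tz_even: "t > 0 \<Longrightarrow> tz (2 * t) = Suc (tz t)" by (simp add: tz.simps[of "2*t"])
lemma tz_odd: "tz (Suc (2 * t)) = 0" by (subst tz.simps) simp
lemma S_fin': "finite {i. bdigit n i = Suc 0}" using S_fin[of n] by simp

lemma card_S: "card {i. bdigit n i = 1} = pc n"
proof (induction n rule: pc.induct)
  case (1 n)
  show ?case
  proof (cases "n = 0")
    case True then show ?thesis by (simp add: bdigit_def)
  next
    case False
    have "card {i. bdigit n i = 1} = card (if odd n then {0::nat} else {}) + card (Suc ` {i. bdigit (n div 2) i = 1})"
      unfolding S_rec[of n] by (intro card_Un_disjoint) (auto simp: S_fin S_fin')
    also have "\<dots> = n mod 2 + pc (n div 2)"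
      using 1 False by (simp add: card_image odd_iff_mod_2_eq_one)
    finally show ?thesis using False by (simp add: pc.simps[of n])
  qed
qed

lemma card_S': "card {i. bdigit n i = Suc 0} = pc n" using card_S[of n] by simp

lemma sum_S: "(\<Sum>i\<in>{i. bdigit n i = 1}. (2::nat) ^ i) = n"
proof (induction n rule: pc.induct)
  case (1 n)
  show ?case
  proof (cases "n = 0")
    case True then show ?thesis by (simp add: bdigit_def)
  next
    case False
    have "(\<Sum>i\<in>{i. bdigit n i = 1}. (2::nat) ^ i) = (\<Sum>i\<in>(if odd n then {0} else {}). (2::nat) ^ i) + (\<Sum>i\<in>Suc ` {i. bdigit (n div 2) i = 1}. 2 ^ i)"
      unfolding S_rec[of n] by (rule sum.union_disjoint) (auto simp: S_fin S_fin')
    also have "(\<Sum>i\<in>Suc ` {i. bdigit (n div 2) i = 1}. (2::nat) ^ i) = 2 * (n div 2)"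
      using 1 False by (simp add: sum.reindex sum_distrib_left[symmetric])
    finally show ?thesis by (cases "odd n") auto
  qed
qed

lemma S_ne: "n > 0 \<Longrightarrow> {i. bdigit n i = 1} \<noteq> {}"
proof
  assume "n > 0" "{i. bdigit n i = 1} = {}"
  then have "(\<Sum>i\<in>{i. bdigit n i = 1}. (2::nat) ^ i) = 0" by simp
  then show False using sum_S[of n] \<open>n > 0\<close> by simp
qed

lemma Least_S: "n > 0 \<Longrightarrow> (LEAST i. bdigit n i = 1) = tz n"
proof (induction n rule: tz.induct)
  case (1 n)
  show ?case
  proof (cases "odd n")
    case True
    then have "bdigit n 0 = 1" by (simp add: bdigit_0 odd_iff_mod_2_eq_one)
    then show ?thesis using True by (simp add: tz.simps[of n] Least_eq_0)
  next
    case False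
    then have h: "n div 2 > 0" using 1(2) by auto
    obtain j where j: "bdigit n j = 1" using S_ne[OF 1(2)] by auto
    have b0: "bdigit n 0 \<noteq> 1" using False by (simp add: bdigit_0 even_iff_mod_2_eq_zero)
    have "(LEAST i. bdigit n i = 1) = Suc (LEAST i. bdigit n (Suc i) = 1)"
      by (rule Least_Suc[OF j b0])
    also have "\<dots> = Suc (tz (n div 2))" using 1(1)[OF _ h] 1(2) False by (simp add: bdigit_Suc)
    finally show ?thesis using False 1(2) by (simp add: tz.simps[of n])
  qed
qed

lemma pc_tz: "n > 0 \<Longrightarrow> pc (n - 1) + 1 = pc n + tz n"
proof (induction n rule: less_induct)
  case (less n)
  show ?case
  proof (cases "odd n")
    case True
    then obtain t where t: "n = 2 * t + 1" by (auto elim: oddE)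
    show ?thesis using t by (simp add: pc_even pc_odd tz_odd)
  next
    case False
    then obtain t where t: "n = 2 * t" "t > 0" using less(2) by (auto elim: evenE)
    have IH: "pc (t - 1) + 1 = pc t + tz t" using less(1)[of t] t by simp
    have "n - 1 = Suc (2 * (t - 1))" using t by simp
    then have "pc (n - 1) = Suc (pc (t - 1))" by (simp add: pc_odd)
    moreover have "pc n = pc t" using t by (simp add: pc_even)
    moreover have "tz n = Suc (tz t)" using t by (simp add: tz_even)
    ultimately show ?thesis using IH by simp
  qed
qed



lemma evenperm_cycle: assumes "distinct cs" shows "evenperm (cycle_of_list cs) \<longleftrightarrow> even (length cs - 1)"
proof -
  have "swapidseq (length cs - 1) (cycle_of_list cs)"
    by (rule swapidseq_ext_imp_swapidseq[OF swapidseq_ext_of_cycles[OF assms]])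
  then show ?thesis using evenperm_unique[OF _ refl] by blast
qed

lemma orbit_support: assumes "permutation p" shows "orbit p s = set (support p s)"
  unfolding support_set[OF assms] orbit_altdef_permutation[OF assms] by blast

lemma evenperm_orbits:
  assumes "p permutes S" "finite S"
  shows "evenperm p \<longleftrightarrow> even (card S + card (orbit p ` S))"
  using assms
proof (induct "card S" arbitrary: S p rule: less_induct)
  case less
  show ?case
  proof (cases "S = {}")
    case True
    then have "p = id" using less(2) by (simp add: permutes_empty)
    then show ?thesis using True by simp
  next
    case False
    then obtain s where "s \<in> S" by blast
    have perm: "permutation p"
      using less(2-3) unfolding permutation_permutes by blast
    define A where "A = orbit p s"
    have A_supp: "A = set (support p s)" unfolding A_def using orbit_support[OF perm] .
    define q where "q = (\<lambda>y. if y \<in> (S - set (support p s)) then p y else y)"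
    have p_eq: "(cycle_of_list (support p s) \<circ> q) = p"
    proof
      fix a
      consider "a \<in> S - set (support p s)" | "a \<in> set (support p s)" | "a \<notin> S" "a \<notin> set (support p s)"
        by blast
      thus "((cycle_of_list (support p s) \<circ> q)) a = p a"
      proof cases
        case 1
        have "(p ^^ 1) a \<in> set (support p a)"
          unfolding support_set[OF perm] by blast
        with \<open>a \<in> S - set (support p s)\<close> have "p a \<notin> set (support p s)"
          using disjoint_support'[OF perm, of a s] by auto
        with \<open>a \<in> S - set (support p s)\<close> show ?thesis
          using id_outside_supp[of _ "support p s"] unfolding q_def by simp
      next
        case 2 thus ?thesis
          using cycle_restrict[OF perm] unfolding q_def by simp
      next
        case 3 thus ?thesis
          using id_outside_supp[OF 3(2)] less(2) permutes_not_in unfolding q_def by fastforce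
      qed
    qed
    have qperm: "q permutes (S - A)"
      unfolding q_def A_supp using semidecomposition[OF less(2-3)] .
    have sA: "s \<in> A" unfolding A_def by (rule permutation_self_in_orbit[OF perm])
    have AS: "A \<subseteq> S" unfolding A_def using permutes_orbit_subset[OF less(2) \<open>s \<in> S\<close>] .
    have cyc: "\<And>x. cyclic_on p (orbit p x)" using cyclic_on_orbit'[OF perm] .
    have inA: "orbit p y = A" if "y \<in> A" for y
      using orbit_cyclic_eq3[OF cyc that[unfolded A_def]] unfolding A_def .
    have outA: "orbit p y \<subseteq> S - A" if "y \<in> S - A" for y
    proof
      fix z assume z: "z \<in> orbit p y"
      have "z \<in> S" using permutes_orbit_subset[OF less(2)] that z by blast
      moreover have "z \<notin> A"
      proof
        assume "z \<in> A"
        then have "orbit p z = A" by (rule inA)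
        moreover have "orbit p z = orbit p y" using orbit_cyclic_eq3[OF cyc z] .
        ultimately show False using that permutation_self_in_orbit[OF perm, of y] by auto
      qed
      ultimately show "z \<in> S - A" by blast
    qed
    have orbq: "orbit q y = orbit p y" if "y \<in> S - A" for y
    proof (rule orbit_cong)
      show "y \<in> orbit p y" by (rule permutation_self_in_orbit[OF perm])
      fix z assume "z \<in> orbit p y"
      then have "z \<in> S - A" using outA[OF that] by blast
      then show "q z = p z" unfolding q_def A_supp by simp
    qed
    have img: "orbit p ` S = insert A (orbit q ` (S - A))"
    proof -
      have "orbit p ` S = orbit p ` A \<union> orbit p ` (S - A)" using AS by blast
      also have "orbit p ` A = {A}" using inA sA by blast
      also have "orbit p ` (S - A) = orbit q ` (S - A)" by (rule image_cong[OF refl], rule orbq[symmetric])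
      finally show ?thesis by simp
    qed
    have notin: "A \<notin> orbit q ` (S - A)"
    proof
      assume "A \<in> orbit q ` (S - A)"
      then obtain y where y: "y \<in> S - A" "A = orbit q y" by blast
      then have "y \<in> A" using orbq[OF y(1)] permutation_self_in_orbit[OF perm, of y] by simp
      then show False using y by blast
    qed
    have finS: "finite (S - A)" using less(3) by simp
    have c1: "card (orbit p ` S) = Suc (card (orbit q ` (S - A)))"
      using img notin finS by simp
    have finA: "finite A" using less(3) AS by (rule finite_subset[rotated])
    have c2a: "card (S - A) = card S - card A" by (rule card_Diff_subset[OF finA AS])
    have c2b: "card A \<le> card S" by (rule card_mono[OF less(3) AS])
    have c2: "card S = card A + card (S - A)" using c2a c2b by simp
    have cA: "card A = length (support p s)"
      unfolding A_supp using distinct_card[OF cycle_of_permutation[OF perm]] .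
    have "card A > 0" using finA sA by (auto simp: card_gt_0_iff)
    then have cA1: "card A \<ge> 1" by simp
    have "S - A \<subset> S" using sA AS by blast
    then have lt: "card (S - A) < card S" by (rule psubset_card_mono[OF less(3)])
    have IH: "evenperm q \<longleftrightarrow> even (card (S - A) + card (orbit q ` (S - A)))"
      using less(1)[OF lt qperm finS] .
    have qp: "permutation q" using qperm finS permutation_permutes by blast
    have "evenperm p \<longleftrightarrow> (evenperm (cycle_of_list (support p s)) \<longleftrightarrow> evenperm q)"
      using evenperm_comp[OF permutation_of_cycle[of "support p s"] qp] unfolding p_eq .
    also have "\<dots> \<longleftrightarrow> (even (card A - 1) \<longleftrightarrow> even (card (S - A) + card (orbit q ` (S - A))))"
      using evenperm_cycle[OF cycle_of_permutation[OF perm]] cA IH by simp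
    also have "\<dots> \<longleftrightarrow> even (card S + card (orbit p ` S))"
      using c1 c2 cA1 by presburger
    finally show ?thesis .
  qed
qed



lemma orbit_cycle:
  assumes "distinct cs" "x \<in> set cs"
  shows "orbit (cycle_of_list cs) x = set cs"
proof
  show "orbit (cycle_of_list cs) x \<subseteq> set cs"
    using permutes_orbit_subset[OF cycle_permutes assms(2)] .
  show "set cs \<subseteq> orbit (cycle_of_list cs) x"
  proof
    fix y assume "y \<in> set cs"
    then obtain j where j: "j < length cs" "y = cs ! j" by (auto simp: in_set_conv_nth)
    obtain i where i: "i < length cs" "x = cs ! i" using assms(2) by (auto simp: in_set_conv_nth)
    define L where "L = length cs"
    define m where "m = j + L - i"
    have e1: "(cycle_of_list cs ^^ m) x = map (cycle_of_list cs ^^ m) cs ! i"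
      unfolding i(2) by (rule nth_map[symmetric, OF i(1)])
    have e2: "map (cycle_of_list cs ^^ m) cs ! i = cs ! ((m + i) mod length cs)"
      by (simp only: cyclic_rotation[OF assms(1)] nth_rotate[OF i(1)])
    have e3: "(m + i) mod length cs = j" using i(1) j(1) unfolding m_def L_def by simp
    have e4: "(cycle_of_list cs ^^ m) x = y" unfolding j(2) using e1 e2 e3 by (simp only:)
    have "(cycle_of_list cs ^^ m) x \<in> orbit (cycle_of_list cs) x"
      unfolding orbit_altdef_permutation[OF permutation_of_cycle] by blast
    then show "y \<in> orbit (cycle_of_list cs) x" unfolding e4 .
  qed
qed

lemma exists_type:
  assumes "\<forall>k \<in># M. k > 0"
  shows "\<exists>p. p permutes {1..sum_mset M} \<and> cycle_type (sum_mset M) p = M"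
  using assms
proof (induction M)
  case empty
  show ?case by (intro exI[of _ id]) (simp add: cycle_type_def permutes_id id_def)
next
  case (add k M)
  define m where "m = sum_mset M"
  obtain p' where p': "p' permutes {1..m}" "cycle_type m p' = M" using add m_def by auto
  have k: "k > 0" using add by simp
  define cs where "cs = [m+1..<m+k+1]"
  define c where "c = cycle_of_list cs"
  have dcs: "distinct cs" unfolding cs_def by simp
  have scs: "set cs = {m+1..m+k}" unfolding cs_def by auto
  define p where "p = c \<circ> p'"
  have sm: "sum_mset (add_mset k M) = m + k" unfolding m_def by simp
  have pp: "p permutes {1..m+k}"
    unfolding p_def c_def
    by (rule permutes_compose[OF permutes_subset[OF p'(1)] permutes_subset[OF cycle_permutes]])
       (auto simp: scs)
  have perm': "permutation p'" using p'(1) permutation_permutes by blast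
  have o1: "orbit p x = orbit p' x" if "x \<in> {1..m}" for x
  proof (rule orbit_cong)
    show "x \<in> orbit p' x" by (rule permutation_self_in_orbit[OF perm'])
    fix z assume "z \<in> orbit p' x"
    then have "z \<in> {1..m}" by (rule subsetD[OF permutes_orbit_subset[OF p'(1) that]])
    then have "p' z \<in> {1..m}" by (simp only: permutes_in_image[OF p'(1)])
    then have "p' z \<notin> set cs" unfolding scs by simp
    then show "p z = p' z" unfolding p_def c_def by (simp add: id_outside_supp)
  qed
  have o2: "orbit p x = set cs" if "x \<in> set cs" for x
  proof -
    have "orbit p x = orbit c x"
    proof (rule orbit_cong)
      show "x \<in> orbit c x" unfolding c_def by (rule permutation_self_in_orbit[OF permutation_of_cycle])
      fix z assume "z \<in> orbit c x"
      moreover have "orbit c x = set cs" unfolding c_def by (rule orbit_cycle[OF dcs that])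
      ultimately have "z \<in> set cs" by simp
      then have "z \<notin> {1..m}" unfolding scs by simp
      then have "p' z = z" by (rule permutes_not_in[OF p'(1)])
      then show "p z = c z" unfolding p_def by simp
    qed
    then show ?thesis using orbit_cycle[OF dcs that] unfolding c_def by simp
  qed
  have img: "orbit p ` {1..m+k} = insert (set cs) (orbit p' ` {1..m})"
  proof -
    have u: "{1..m+k} = {1..m} \<union> set cs" unfolding scs by auto
    have i1: "orbit p ` {1..m} = orbit p' ` {1..m}" by (rule image_cong[OF refl], rule o1)
    have ne: "set cs \<noteq> {}" using k unfolding scs by simp
    have i2: "orbit p ` set cs = (\<lambda>_. set cs) ` set cs" by (rule image_cong[OF refl], rule o2)
    have i3: "orbit p ` set cs = {set cs}" unfolding i2 using ne by (simp add: image_constant_conv)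
    have "orbit p ` {1..m+k} = orbit p ` {1..m} \<union> orbit p ` set cs" unfolding u by (rule image_Un)
    then show ?thesis unfolding i1 i3 by simp
  qed
  have notin: "set cs \<notin> orbit p' ` {1..m}"
  proof
    assume "set cs \<in> orbit p' ` {1..m}"
    then obtain x where x: "x \<in> {1..m}" "set cs = orbit p' x" by blast
    have "m + 1 \<in> set cs" using k by (simp add: scs)
    then have "m + 1 \<in> orbit p' x" using x(2) by simp
    then have "m + 1 \<in> {1..m}" by (rule subsetD[OF permutes_orbit_subset[OF p'(1) x(1)]])
    then show False by simp
  qed
  have "cycle_type (m + k) p = add_mset k M"
  proof -
    have "cycle_type (m + k) p = image_mset card (mset_set (insert (set cs) (orbit p' ` {1..m})))"
      unfolding cycle_type_def img ..
    also have "\<dots> = add_mset (card (set cs)) (image_mset card (mset_set (orbit p' ` {1..m})))"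
      using notin by simp
    also have "card (set cs) = k" by (simp add: scs)
    finally show ?thesis using p'(2) unfolding cycle_type_def by simp
  qed
  then have "p permutes {1..sum_mset (add_mset k M)} \<and> cycle_type (sum_mset (add_mset k M)) p = add_mset k M"
    unfolding sm using pp by simp
  then show ?case by blast
qed


theorem lemma4p4:
  fixes n :: nat
  assumes "n \<ge> 2"
  defines "r \<equiv> (LEAST i. bdigit n i = 1)"
  shows "(odd n \<longrightarrow>
           (\<forall>p. p permutes {1..n} \<and> cycle_type n p = xpart n \<longrightarrow>
              (\<not> evenperm p \<longleftrightarrow> odd (\<Sum>i\<in>{1..Max {i. bdigit n i = 1}}. bdigit n i))))
       \<and> (even n \<longrightarrow>
           ((\<forall>p. p permutes {1..n} \<and> cycle_type n p = xpart n \<longrightarrow> \<not> evenperm p)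
            \<and> (\<forall>q. q permutes {1..n} \<and> cycle_type n q = ypart n \<longrightarrow> \<not> evenperm q)
            \<longleftrightarrow> odd (\<Sum>i\<in>{r..Max {i. bdigit n i = 1}}. bdigit n i) \<and> r \<ge> 2 \<and> even r))"
proof -
  let ?S = "{i. bdigit n i = 1}"
  define M where "M = Max ?S"
  have n0: "n > 0" using assms(1) by simp
  have par: "evenperm p \<longleftrightarrow> even (n + size (cycle_type n p))" if "p permutes {1..n}" for p
    using evenperm_orbits[OF that] by (simp add: cycle_type_def)
  have sx: "size (xpart n) = pc n" by (simp add: xpart_def card_S card_S')
  have sy: "size (ypart n) = pc (n - 2) + 2" by (simp add: ypart_def xpart_def card_S card_S')
  have sumx: "sum_mset (xpart m) = m" for m
    unfolding xpart_def sum_unfold_sum_mset[symmetric] by (rule sum_S)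
  have posx: "\<forall>k \<in># xpart n. k > 0" by (simp add: xpart_def)
  have ex_x: "\<exists>p. p permutes {1..n} \<and> cycle_type n p = xpart n"
    using exists_type[OF posx] unfolding sumx[of n] .
  have sumy: "sum_mset (ypart n) = n" using sumx[of "n - 2"] assms(1) by (simp add: ypart_def)
  have posy: "\<forall>k \<in># ypart n. k > 0" by (simp add: xpart_def ypart_def)
  have ex_y: "\<exists>p. p permutes {1..n} \<and> cycle_type n p = ypart n"
    using exists_type[OF posy] unfolding sumy .
  have b01: "bdigit n i = 0 \<or> bdigit n i = 1" for i by (auto simp: bdigit_def)
  have sumeq: "(\<Sum>i\<in>A. bdigit n i) = card (A \<inter> ?S)" if "finite A" for A
  proof -
    have "(\<Sum>i\<in>A. bdigit n i) = (\<Sum>i\<in>A. if bdigit n i = 1 then 1 else 0)"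
      by (rule sum.cong) (use b01 in auto)
    also have "\<dots> = card (A \<inter> ?S)" using that by (simp add: sum.If_cases Int_def)
    finally show ?thesis .
  qed
  have finS: "finite ?S" by (rule S_fin)
  have neS: "?S \<noteq> {}" using S_ne[OF n0] .
  have Sle: "i \<le> M" if "i \<in> ?S" for i using Max_ge[OF finS that] unfolding M_def .
  have part1: "odd n \<longrightarrow>
           (\<forall>p. p permutes {1..n} \<and> cycle_type n p = xpart n \<longrightarrow>
              (\<not> evenperm p \<longleftrightarrow> odd (\<Sum>i\<in>{1..M}. bdigit n i)))"
  proof (intro impI allI)
    fix p assume odd: "odd n" and p: "p permutes {1..n} \<and> cycle_type n p = xpart n"
    have z: "0 \<in> ?S" using odd by (simp add: bdigit_0 odd_iff_mod_2_eq_one)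
    have "{1..M} \<inter> ?S = ?S - {0}" using Sle by auto
    then have "(\<Sum>i\<in>{1..M}. bdigit n i) = pc n - 1"
      using sumeq[of "{1..M}"] z finS card_S[of n] card_S'[of n] by simp
    moreover have "pc n \<ge> 1" using z finS card_S[of n] by (metis One_nat_def Suc_leI card_gt_0_iff empty_iff)
    moreover have "\<not> evenperm p \<longleftrightarrow> odd (n + pc n)" using par[of p] p sx by simp
    ultimately show "\<not> evenperm p \<longleftrightarrow> odd (\<Sum>i\<in>{1..M}. bdigit n i)" using odd by presburger
  qed
  have part2: "even n \<longrightarrow>
           ((\<forall>p. p permutes {1..n} \<and> cycle_type n p = xpart n \<longrightarrow> \<not> evenperm p)
            \<and> (\<forall>q. q permutes {1..n} \<and> cycle_type n q = ypart n \<longrightarrow> \<not> evenperm q)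
            \<longleftrightarrow> odd (\<Sum>i\<in>{r..M}. bdigit n i) \<and> r \<ge> 2 \<and> even r)"
  proof
    assume ev: "even n"
    have rt: "r = tz n" unfolding r_def using Least_S[OF n0] .
    have "{r..M} \<inter> ?S = ?S" using Sle unfolding r_def by (auto intro: Least_le)
    then have sumr: "(\<Sum>i\<in>{r..M}. bdigit n i) = pc n" using sumeq[of "{r..M}"] card_S[of n] card_S'[of n] by simp
    obtain t where t: "n = 2 * t" "t > 0" using ev n0 by (auto elim: evenE)
    have "n - 2 = 2 * (t - 1)" using t by simp
    then have "pc (n - 2) = pc (t - 1)" by (simp add: pc_even)
    moreover have "pc (t - 1) + 1 = pc t + tz t" using pc_tz t by simp
    moreover have "pc n = pc t" using t by (simp add: pc_even)
    moreover have "tz n = Suc (tz t)" using t by (simp add: tz_even)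
    ultimately have key: "pc (n - 2) + 2 = pc n + tz n" and tz1: "tz n \<ge> 1" by simp_all
    have "((\<forall>p. p permutes {1..n} \<and> cycle_type n p = xpart n \<longrightarrow> \<not> evenperm p)
            \<and> (\<forall>q. q permutes {1..n} \<and> cycle_type n q = ypart n \<longrightarrow> \<not> evenperm q))
          \<longleftrightarrow> odd (n + pc n) \<and> odd (n + (pc (n - 2) + 2))"
    proof
      assume h: "(\<forall>p. p permutes {1..n} \<and> cycle_type n p = xpart n \<longrightarrow> \<not> evenperm p)
            \<and> (\<forall>q. q permutes {1..n} \<and> cycle_type n q = ypart n \<longrightarrow> \<not> evenperm q)"
      obtain p where p: "p permutes {1..n}" "cycle_type n p = xpart n" using ex_x by blast
      obtain q where q: "q permutes {1..n}" "cycle_type n q = ypart n" using ex_y by blast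
      show "odd (n + pc n) \<and> odd (n + (pc (n - 2) + 2))"
        using h p q par[of p] par[of q] sx sy by auto
    next
      assume h: "odd (n + pc n) \<and> odd (n + (pc (n - 2) + 2))"
      show "(\<forall>p. p permutes {1..n} \<and> cycle_type n p = xpart n \<longrightarrow> \<not> evenperm p)
            \<and> (\<forall>q. q permutes {1..n} \<and> cycle_type n q = ypart n \<longrightarrow> \<not> evenperm q)"
        using h par sx sy by auto
    qed
    also have "\<dots> \<longleftrightarrow> odd (pc n) \<and> tz n \<ge> 2 \<and> even (tz n)"
      using key tz1 ev by presburger
    also have "\<dots> \<longleftrightarrow> odd (\<Sum>i\<in>{r..M}. bdigit n i) \<and> r \<ge> 2 \<and> even r"
      using sumr rt by simp
    finally show "((\<forall>p. p permutes {1..n} \<and> cycle_type n p = xpart n \<longrightarrow> \<not> evenperm p)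
            \<and> (\<forall>q. q permutes {1..n} \<and> cycle_type n q = ypart n \<longrightarrow> \<not> evenperm q)
            \<longleftrightarrow> odd (\<Sum>i\<in>{r..M}. bdigit n i) \<and> r \<ge> 2 \<and> even r)" .
  qed
  show ?thesis using part1 part2 unfolding M_def by blast
qed

end
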